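(* Let $G:\mathcal{A}\to\mathcal{B}$ be a discrete opfibration. If $\mathcal{B}$ is quasi-Gröbner, then $\mathcal{A}$ is quasi-Gröbner.
   Context: A functor $G:\mathcal{A}\to\mathcal{B}$ is a discrete opfibration if for every object $a$ of $\mathcal{A}$ and every morphism $g:G(a)\to b$ in $\mathcal{B}$ there is a unique morphism $f$ out of $a$ with $G(f)=g$. Quasi-Gröbner: for a small category $\mathcal{C}$ and object $c$, an admissible order on morphisms out of $c$ is a choice of well-orders on each $\mathrm{Hom}(c,c')$ such that $f\prec f'$ implies $g\circ f\prec g\circ f'$ for all $g$; the preorder $f\le g$ iff $g=h\circ f$ for some $h$ gives a poset $|c/\mathcal{C}|$; a poset is Noetherian if every sequence $x_1,x_2,\dots$ has $i<j$ with $x_i\le x_j$. $\mathcal{C}$ is Gröbner if for every object $c$: (G1) morphisms out of $c$ admit an admissible order and (G2) $|c/\mathcal{C}|$ is Noetherian. A functor $\Phi:\mathcal{C}\to\mathcal{D}$ has property (F) if for every object $d$ of $\mathcal{D}$ there are finitely many objects $c_i$ and morphisms $f_i:d\to\Phi(c_i)$ such that every $f:d\to\Phi(c)$ factors as $\Phi(g)\circ f_i$ for some $i$ and $g:c_i\to c$. $\mathcal{D}$ is quasi-Gröbner if there are a Gröbner $\mathcal{C}$ and an essentially surjective functor $\mathcal{C}\to\mathcal{D}$ with property (F). *)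

theory Defs
  imports Main
begin

text \<open>Small categories, given by explicit carrier sets of objects and morphisms.
  Comp C g f is the composite g after f (defined when Cod f = Dom g).\<close>

record ('o, 'm) cat =
  Obj  :: "'o set"
  Arr  :: "'m set"
  Dom  :: "'m \<Rightarrow> 'o"
  Cod  :: "'m \<Rightarrow> 'o"
  Id   :: "'o \<Rightarrow> 'm"
  Comp :: "'m \<Rightarrow> 'm \<Rightarrow> 'm"

definition category :: "('o, 'm) cat \<Rightarrow> bool" where
  "category C \<longleftrightarrow>
     (\<forall>f\<in>Arr C. Dom C f \<in> Obj C \<and> Cod C f \<in> Obj C) \<and>
     (\<forall>a\<in>Obj C. Id C a \<in> Arr C \<and> Dom C (Id C a) = a \<and> Cod C (Id C a) = a) \<and>
     (\<forall>f\<in>Arr C. \<forall>g\<in>Arr C. Cod C f = Dom C g \<longrightarrow>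
         Comp C g f \<in> Arr C \<and> Dom C (Comp C g f) = Dom C f \<and> Cod C (Comp C g f) = Cod C g) \<and>
     (\<forall>f\<in>Arr C. Comp C (Id C (Cod C f)) f = f \<and> Comp C f (Id C (Dom C f)) = f) \<and>
     (\<forall>f\<in>Arr C. \<forall>g\<in>Arr C. \<forall>h\<in>Arr C. Cod C f = Dom C g \<longrightarrow> Cod C g = Dom C h \<longrightarrow>
         Comp C h (Comp C g f) = Comp C (Comp C h g) f)"

definition hom :: "('o, 'm) cat \<Rightarrow> 'o \<Rightarrow> 'o \<Rightarrow> 'm set" where
  "hom C a b = {f \<in> Arr C. Dom C f = a \<and> Cod C f = b}"

definition is_functor :: "('o1, 'm1) cat \<Rightarrow> ('o2, 'm2) cat \<Rightarrow> ('o1 \<Rightarrow> 'o2) \<Rightarrow> ('m1 \<Rightarrow> 'm2) \<Rightarrow> bool" where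
  "is_functor C D Fo Fm \<longleftrightarrow>
     category C \<and> category D \<and>
     (\<forall>a\<in>Obj C. Fo a \<in> Obj D) \<and>
     (\<forall>f\<in>Arr C. Fm f \<in> Arr D \<and> Dom D (Fm f) = Fo (Dom C f) \<and> Cod D (Fm f) = Fo (Cod C f)) \<and>
     (\<forall>a\<in>Obj C. Fm (Id C a) = Id D (Fo a)) \<and>
     (\<forall>f\<in>Arr C. \<forall>g\<in>Arr C. Cod C f = Dom C g \<longrightarrow> Fm (Comp C g f) = Comp D (Fm g) (Fm f))"

definition discrete_opfibration ::
  "('o1, 'm1) cat \<Rightarrow> ('o2, 'm2) cat \<Rightarrow> ('o1 \<Rightarrow> 'o2) \<Rightarrow> ('m1 \<Rightarrow> 'm2) \<Rightarrow> bool" where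
  "discrete_opfibration A B Go Gm \<longleftrightarrow>
     is_functor A B Go Gm \<and>
     (\<forall>a\<in>Obj A. \<forall>g\<in>Arr B. Dom B g = Go a \<longrightarrow>
        (\<exists>!f. f \<in> Arr A \<and> Dom A f = a \<and> Gm f = g))"

definition iso :: "('o, 'm) cat \<Rightarrow> 'm \<Rightarrow> bool" where
  "iso C f \<longleftrightarrow> f \<in> Arr C \<and>
     (\<exists>g \<in> hom C (Cod C f) (Dom C f).
        Comp C g f = Id C (Dom C f) \<and> Comp C f g = Id C (Cod C f))"

definition ess_surj :: "('o1, 'm1) cat \<Rightarrow> ('o2, 'm2) cat \<Rightarrow> ('o1 \<Rightarrow> 'o2) \<Rightarrow> bool" where
  "ess_surj C D Fo \<longleftrightarrow>
     (\<forall>d\<in>Obj D. \<exists>c\<in>Obj C. \<exists>f\<in>hom D (Fo c) d. iso D f)"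

definition property_F ::
  "('o1, 'm1) cat \<Rightarrow> ('o2, 'm2) cat \<Rightarrow> ('o1 \<Rightarrow> 'o2) \<Rightarrow> ('m1 \<Rightarrow> 'm2) \<Rightarrow> bool" where
  "property_F C D Fo Fm \<longleftrightarrow>
     (\<forall>d\<in>Obj D. \<exists>S. finite S \<and>
        (\<forall>(ci, fi)\<in>S. ci \<in> Obj C \<and> fi \<in> hom D d (Fo ci)) \<and>
        (\<forall>c\<in>Obj C. \<forall>f\<in>hom D d (Fo c).
           \<exists>(ci, fi)\<in>S. \<exists>g\<in>hom C ci c. f = Comp D (Fm g) fi))"

text \<open>Admissible order on morphisms out of c: a family r, indexed by the target c',
  of (reflexive) well-orders on Hom(c,c') such that strict inequality is preserved by
  post-composition.\<close>

definition admissible_order :: "('o, 'm) cat \<Rightarrow> 'o \<Rightarrow> ('o \<Rightarrow> 'm rel) \<Rightarrow> bool" where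
  "admissible_order C c r \<longleftrightarrow>
     (\<forall>c'\<in>Obj C. r c' \<subseteq> hom C c c' \<times> hom C c c' \<and> well_order_on (hom C c c') (r c')) \<and>
     (\<forall>c'\<in>Obj C. \<forall>c''\<in>Obj C. \<forall>f\<in>hom C c c'. \<forall>f'\<in>hom C c c'. \<forall>g\<in>hom C c' c''.
        (f, f') \<in> r c' \<and> f \<noteq> f' \<longrightarrow>
        (Comp C g f, Comp C g f') \<in> r c'' \<and> Comp C g f \<noteq> Comp C g f')"

text \<open>Noetherianity of the poset |c/C|, stated on the underlying preorder
  (f \<le> g iff g = h o f for some h) of all morphisms out of c.\<close>

definition noetherian_under :: "('o, 'm) cat \<Rightarrow> 'o \<Rightarrow> bool" where
  "noetherian_under C c \<longleftrightarrow>
     (\<forall>x :: nat \<Rightarrow> 'm. (\<forall>n. x n \<in> Arr C \<and> Dom C (x n) = c) \<longrightarrow>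
        (\<exists>i j. i < j \<and> (\<exists>h\<in>hom C (Cod C (x i)) (Cod C (x j)). x j = Comp C h (x i))))"

definition grobner :: "('o, 'm) cat \<Rightarrow> bool" where
  "grobner C \<longleftrightarrow> category C \<and>
     (\<forall>c\<in>Obj C. (\<exists>r. admissible_order C c r) \<and> noetherian_under C c)"

text \<open>D is quasi-Groebner, with the witnessing Groebner category living in the
  object/morphism types 'co and 'cm (type quantification is not available in HOL).\<close>

definition quasi_grobner :: "('o, 'm) cat \<Rightarrow> ('co \<times> 'cm) itself \<Rightarrow> bool" where
  "quasi_grobner D T \<longleftrightarrow>
     (\<exists>(C :: ('co, 'cm) cat) Fo Fm.
        grobner C \<and> is_functor C D Fo Fm \<and> ess_surj C D Fo \<and> property_F C D Fo Fm)"

end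

theory Submission
  imports Defs
begin

lemma wo_pullback:
  assumes wo: "well_order_on B R" and inj: "inj_on h X" and im: "h ` X \<subseteq> B"
  shows "well_order_on X {(p,q). p\<in>X \<and> q\<in>X \<and> (h p, h q) \<in> R}" (is "well_order_on X ?R")
proof -
  from wo have lin: "linear_order_on B R" and wf: "wf (R - Relation.Id)" by (auto simp: well_order_on_def)
  have "?R - Relation.Id \<subseteq> inv_image (R - Relation.Id) h"
  proof
    fix pq assume "pq \<in> ?R - Relation.Id"
    then obtain p q where pq: "pq = (p,q)" "p \<in> X" "q \<in> X" "(h p, h q) \<in> R" "p \<noteq> q" by auto
    hence "h p \<noteq> h q" using inj by (metis inj_on_eq_iff)
    thus "pq \<in> inv_image (R - Relation.Id) h" using pq by simp
  qed
  hence w: "wf (?R - Relation.Id)" by (rule wf_subset[OF wf_inv_image[OF wf]])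
  from lin have "refl_on B R" "trans R" "antisym R" "total_on B R"
    by (auto simp: order_on_defs)
  hence "linear_order_on X ?R" using inj im
    unfolding order_on_defs
    apply (intro conjI)
        apply blast
       apply (auto simp: refl_on_def image_subset_iff)[1]
      apply (unfold trans_def, blast)[1]
     apply (unfold antisym_def inj_on_def, blast)[1]
    apply (unfold total_on_def inj_on_def image_subset_iff, blast)
    done
  with w show ?thesis by (simp add: well_order_on_def)
qed


lemma cat_dom: "category C \<Longrightarrow> f \<in> Arr C \<Longrightarrow> Dom C f \<in> Obj C" by (simp add: category_def)
lemma cat_cod: "category C \<Longrightarrow> f \<in> Arr C \<Longrightarrow> Cod C f \<in> Obj C" by (simp add: category_def)
lemma cat_id: "category C \<Longrightarrow> a \<in> Obj C \<Longrightarrow> Id C a \<in> Arr C \<and> Dom C (Id C a) = a \<and> Cod C (Id C a) = a"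
  by (simp add: category_def)
lemma cat_comp: "category C \<Longrightarrow> f \<in> Arr C \<Longrightarrow> g \<in> Arr C \<Longrightarrow> Cod C f = Dom C g \<Longrightarrow>
  Comp C g f \<in> Arr C \<and> Dom C (Comp C g f) = Dom C f \<and> Cod C (Comp C g f) = Cod C g"
  by (simp add: category_def)
lemma cat_idl: "category C \<Longrightarrow> f \<in> Arr C \<Longrightarrow> Comp C (Id C (Cod C f)) f = f" by (simp add: category_def)
lemma cat_idr: "category C \<Longrightarrow> f \<in> Arr C \<Longrightarrow> Comp C f (Id C (Dom C f)) = f" by (simp add: category_def)
lemma cat_assoc: "category C \<Longrightarrow> f \<in> Arr C \<Longrightarrow> g \<in> Arr C \<Longrightarrow> h \<in> Arr C \<Longrightarrow> Cod C f = Dom C g \<Longrightarrow> Cod C g = Dom C h \<Longrightarrow>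
         Comp C h (Comp C g f) = Comp C (Comp C h g) f" by (simp add: category_def)

lemma fun_cat: "is_functor C D Fo Fm \<Longrightarrow> category C \<and> category D" by (simp add: is_functor_def)
lemma fun_obj: "is_functor C D Fo Fm \<Longrightarrow> a \<in> Obj C \<Longrightarrow> Fo a \<in> Obj D" by (simp add: is_functor_def)
lemma fun_arr: "is_functor C D Fo Fm \<Longrightarrow> f \<in> Arr C \<Longrightarrow> Fm f \<in> Arr D \<and> Dom D (Fm f) = Fo (Dom C f) \<and> Cod D (Fm f) = Fo (Cod C f)"
  by (simp add: is_functor_def)
lemma fun_id: "is_functor C D Fo Fm \<Longrightarrow> a \<in> Obj C \<Longrightarrow> Fm (Id C a) = Id D (Fo a)" by (simp add: is_functor_def)
lemma fun_comp: "is_functor C D Fo Fm \<Longrightarrow> f \<in> Arr C \<Longrightarrow> g \<in> Arr C \<Longrightarrow> Cod C f = Dom C g \<Longrightarrow> Fm (Comp C g f) = Comp D (Fm g) (Fm f)"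
  by (simp add: is_functor_def)

definition fp :: "('co,'cm) cat \<Rightarrow> ('ao,'am) cat \<Rightarrow> ('co \<Rightarrow> 'bo) \<Rightarrow> ('cm \<Rightarrow> 'bm) \<Rightarrow> ('ao \<Rightarrow> 'bo) \<Rightarrow> ('am \<Rightarrow> 'bm) \<Rightarrow> ('co \<times> 'ao, 'cm \<times> 'am) cat" where
"fp C A Fo Fm Go Gm = \<lparr>Obj = {x. fst x \<in> Obj C \<and> snd x \<in> Obj A \<and> Fo (fst x) = Go (snd x)},
   Arr = {p. fst p \<in> Arr C \<and> snd p \<in> Arr A \<and> Fm (fst p) = Gm (snd p)},
   Dom = (\<lambda>p. (Dom C (fst p), Dom A (snd p))),
   Cod = (\<lambda>p. (Cod C (fst p), Cod A (snd p))),
   Id = (\<lambda>x. (Id C (fst x), Id A (snd x))),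
   Comp = (\<lambda>q p. (Comp C (fst q) (fst p), Comp A (snd q) (snd p)))\<rparr>"

lemma fp_simps:
  "x \<in> Obj (fp C A Fo Fm Go Gm) \<longleftrightarrow> fst x \<in> Obj C \<and> snd x \<in> Obj A \<and> Fo (fst x) = Go (snd x)"
  "p \<in> Arr (fp C A Fo Fm Go Gm) \<longleftrightarrow> fst p \<in> Arr C \<and> snd p \<in> Arr A \<and> Fm (fst p) = Gm (snd p)"
  "Dom (fp C A Fo Fm Go Gm) p = (Dom C (fst p), Dom A (snd p))"
  "Cod (fp C A Fo Fm Go Gm) p = (Cod C (fst p), Cod A (snd p))"
  "Id (fp C A Fo Fm Go Gm) x = (Id C (fst x), Id A (snd x))"
  "Comp (fp C A Fo Fm Go Gm) q p = (Comp C (fst q) (fst p), Comp A (snd q) (snd p))"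
  by (auto simp: fp_def)

lemma fp_hom: "p \<in> hom (fp C A Fo Fm Go Gm) x y \<longleftrightarrow>
   fst p \<in> hom C (fst x) (fst y) \<and> snd p \<in> hom A (snd x) (snd y) \<and> Fm (fst p) = Gm (snd p)"
  by (auto simp: hom_def fp_simps prod_eq_iff)

lemma disc_fun: "discrete_opfibration A B Go Gm \<Longrightarrow> is_functor A B Go Gm"
  by (simp add: discrete_opfibration_def)

lemma disc_unique:
  assumes "discrete_opfibration A B Go Gm" "f1 \<in> Arr A" "f2 \<in> Arr A" "Dom A f1 = Dom A f2" "Gm f1 = Gm f2"
  shows "f1 = f2"
proof -
  from assms(1) have F: "is_functor A B Go Gm" and U: "\<forall>a\<in>Obj A. \<forall>g\<in>Arr B. Dom B g = Go a \<longrightarrow>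
        (\<exists>!f. f \<in> Arr A \<and> Dom A f = a \<and> Gm f = g)" by (auto simp: discrete_opfibration_def)
  have "Dom A f1 \<in> Obj A" using F assms(2) by (meson cat_dom fun_cat)
  moreover have "Gm f1 \<in> Arr B" "Dom B (Gm f1) = Go (Dom A f1)" using fun_arr[OF F assms(2)] by auto
  ultimately have "\<exists>!f. f \<in> Arr A \<and> Dom A f = Dom A f1 \<and> Gm f = Gm f1" using U by blast
  then obtain f where "\<And>y. y \<in> Arr A \<and> Dom A y = Dom A f1 \<and> Gm y = Gm f1 \<Longrightarrow> y = f" by (elim ex1E) blast
  hence "f1 = f" "f2 = f" using assms(2-5) by auto
  thus ?thesis by simp
qed

lemma disc_lift:
  assumes "discrete_opfibration A B Go Gm" "a \<in> Obj A" "g \<in> Arr B" "Dom B g = Go a"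
  obtains f where "f \<in> Arr A" "Dom A f = a" "Gm f = g"
proof -
  have U: "\<forall>a\<in>Obj A. \<forall>g\<in>Arr B. Dom B g = Go a \<longrightarrow>
        (\<exists>!f. f \<in> Arr A \<and> Dom A f = a \<and> Gm f = g)" using assms(1) unfolding discrete_opfibration_def by (elim conjE)
  show ?thesis using U assms(2-4) that by blast
qed


lemma fp_category:
  assumes C: "category C" and A: "category A" and F: "is_functor C B Fo Fm" and G: "is_functor A B Go Gm"
  shows "category (fp C A Fo Fm Go Gm)"
  unfolding category_def fp_simps
  apply (intro conjI)
  subgoal using C A by (auto simp: fp_simps cat_dom cat_cod) (metis fun_arr[OF F] fun_arr[OF G])+
  subgoal using C A F G by (auto simp: fp_simps cat_id fun_id)
  subgoal using C A F G by (auto simp: fp_simps cat_comp fun_comp)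
  subgoal using C A by (auto simp: fp_simps cat_idl cat_idr prod_eq_iff)
  subgoal using C A by (auto simp: fp_simps cat_assoc prod_eq_iff)
  done

lemma fp_functor:
  assumes C: "category C" and A: "category A" and F: "is_functor C B Fo Fm" and G: "is_functor A B Go Gm"
  shows "is_functor (fp C A Fo Fm Go Gm) A snd snd"
  unfolding is_functor_def using fp_category[OF assms] A
  by (auto simp: fp_simps)



lemma fp_ess_surj:
  assumes D: "discrete_opfibration A B Go Gm" and F: "is_functor C B Fo Fm" and E: "ess_surj C B Fo"
  shows "ess_surj (fp C A Fo Fm Go Gm) A snd"
  unfolding ess_surj_def
proof
  fix a assume a: "a \<in> Obj A"
  have G: "is_functor A B Go Gm" using D by (rule disc_fun)
  have cA: "category A" and cB: "category B" using fun_cat[OF G] by auto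
  have cC: "category C" using fun_cat[OF F] by auto
  have "Go a \<in> Obj B" using fun_obj[OF G a] .
  then obtain c h where c: "c \<in> Obj C" and h: "h \<in> hom B (Fo c) (Go a)" and ih: "iso B h"
    using E unfolding ess_surj_def by blast
  from ih h obtain h' where h': "h' \<in> hom B (Go a) (Fo c)" and
    e1: "Comp B h' h = Id B (Fo c)" and e2: "Comp B h h' = Id B (Go a)"
    unfolding iso_def hom_def by auto
  obtain f where f: "f \<in> Arr A" "Dom A f = a" "Gm f = h'"
    using disc_lift[OF D a, of h'] h' by (auto simp: hom_def)
  define a' where "a' = Cod A f"
  have a': "a' \<in> Obj A" using cat_cod[OF cA f(1)] a'_def by simp
  have Ga': "Go a' = Fo c" using fun_arr[OF G f(1)] f h' a'_def by (auto simp: hom_def)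
  obtain f' where f': "f' \<in> Arr A" "Dom A f' = a'" "Gm f' = h"
    using disc_lift[OF D a', of h] h Ga' by (auto simp: hom_def)
  have cf: "Comp A f' f \<in> Arr A" "Dom A (Comp A f' f) = a" "Cod A (Comp A f' f) = Cod A f'"
    using cat_comp[OF cA f(1) f'(1)] f f' a'_def by auto
  have "Gm (Comp A f' f) = Comp B (Gm f') (Gm f)"
    using fun_comp[OF G f(1) f'(1)] f'(2) a'_def by simp
  also have "\<dots> = Id B (Go a)" using f(3) f'(3) e2 by simp
  also have "\<dots> = Gm (Id A a)" using fun_id[OF G a] by simp
  finally have gm1: "Gm (Comp A f' f) = Gm (Id A a)" .
  have idA: "Id A a \<in> Arr A" "Dom A (Id A a) = a" using cat_id[OF cA a] by auto
  have i1: "Comp A f' f = Id A a"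
    by (rule disc_unique[OF D cf(1) idA(1)]) (simp_all only: cf(2) idA(2) gm1)
  hence codf': "Cod A f' = a" using cf cat_id[OF cA a] by simp
  have cf2: "Comp A f f' \<in> Arr A" "Dom A (Comp A f f') = a'"
    using cat_comp[OF cA f'(1) f(1)] f f' codf' by auto
  have "Gm (Comp A f f') = Comp B (Gm f) (Gm f')"
    using fun_comp[OF G f'(1) f(1)] f(2) codf' by simp
  also have "\<dots> = Id B (Go a')" using f(3) f'(3) e1 Ga' by simp
  also have "\<dots> = Gm (Id A a')" using fun_id[OF G a'] by simp
  finally have gm2: "Gm (Comp A f f') = Gm (Id A a')" .
  have idA': "Id A a' \<in> Arr A" "Dom A (Id A a') = a'" using cat_id[OF cA a'] by auto
  have i2: "Comp A f f' = Id A a'"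
    by (rule disc_unique[OF D cf2(1) idA'(1)]) (simp_all only: cf2(2) idA'(2) gm2)
  have obj: "(c, a') \<in> Obj (fp C A Fo Fm Go Gm)" using c a' Ga' by (simp add: fp_simps)
  have "f' \<in> hom A (snd (c, a')) a" using f' codf' by (simp add: hom_def)
  moreover have "iso A f'"
    unfolding iso_def using f' f codf' i1 i2 a'_def by (auto simp: hom_def)
  ultimately show "\<exists>x\<in>Obj (fp C A Fo Fm Go Gm). \<exists>f\<in>hom A (snd x) a. iso A f"
    using obj by blast
qed



lemma fp_property_F:
  assumes D: "discrete_opfibration A B Go Gm" and F: "is_functor C B Fo Fm" and PF: "property_F C B Fo Fm"
  shows "property_F (fp C A Fo Fm Go Gm) A snd snd"
  unfolding property_F_def
proof
  fix a assume a: "a \<in> Obj A"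
  have G: "is_functor A B Go Gm" using D by (rule disc_fun)
  have cA: "category A" and cB: "category B" using fun_cat[OF G] by auto
  have cC: "category C" using fun_cat[OF F] by auto
  have Goa: "Go a \<in> Obj B" using fun_obj[OF G a] .
  have "\<exists>S. finite S \<and>
        (\<forall>(ci, fi)\<in>S. ci \<in> Obj C \<and> fi \<in> hom B (Go a) (Fo ci)) \<and>
        (\<forall>c\<in>Obj C. \<forall>f\<in>hom B (Go a) (Fo c).
           \<exists>(ci, fi)\<in>S. \<exists>g\<in>hom C ci c. f = Comp B (Fm g) fi)"
    using PF Goa unfolding property_F_def by (rule bspec)
  then obtain S where Sfin: "finite S" and S1: "\<forall>(ci, fi)\<in>S. ci \<in> Obj C \<and> fi \<in> hom B (Go a) (Fo ci)"
    and S2: "\<forall>c\<in>Obj C. \<forall>f\<in>hom B (Go a) (Fo c).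
           \<exists>(ci, fi)\<in>S. \<exists>g\<in>hom C ci c. f = Comp B (Fm g) fi"
    by (elim exE conjE)
  define L where "L = (\<lambda>fi. SOME l. l \<in> Arr A \<and> Dom A l = a \<and> Gm l = fi)"
  have L: "L fi \<in> Arr A \<and> Dom A (L fi) = a \<and> Gm (L fi) = fi" if "fi \<in> hom B (Go a) X" for fi X
  proof -
    have "fi \<in> Arr B" "Dom B fi = Go a" using that by (auto simp: hom_def)
    then obtain l where "l \<in> Arr A" "Dom A l = a" "Gm l = fi"
      using disc_lift[OF D a] by blast
    thus ?thesis unfolding L_def by (rule someI[where x = l, OF conjI[OF _ conjI]])
  qed
  have LC: "Go (Cod A (L fi)) = X" "Cod A (L fi) \<in> Obj A" if "fi \<in> hom B (Go a) X" for fi X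
    using L[OF that] fun_arr[OF G, of "L fi"] that cat_cod[OF cA, of "L fi"] by (auto simp: hom_def)
  define S' where "S' = (\<lambda>(ci, fi). ((ci, Cod A (L fi)), L fi)) ` S"
  show "\<exists>S. finite S \<and>
          (\<forall>(ci, fi)\<in>S. ci \<in> Obj (fp C A Fo Fm Go Gm) \<and> fi \<in> hom A a (snd ci)) \<and>
          (\<forall>c\<in>Obj (fp C A Fo Fm Go Gm). \<forall>f\<in>hom A a (snd c).
              \<exists>(ci, fi)\<in>S. \<exists>g\<in>hom (fp C A Fo Fm Go Gm) ci c. f = Comp A (snd g) fi)"
  proof (intro exI[of _ S'] conjI)
    show "finite S'" using Sfin S'_def by simp
    show "\<forall>(ci, fi)\<in>S'. ci \<in> Obj (fp C A Fo Fm Go Gm) \<and> fi \<in> hom A a (snd ci)"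
    proof (clarsimp simp: S'_def)
      fix ci fi assume "(ci, fi) \<in> S"
      hence ci: "ci \<in> Obj C" and fi: "fi \<in> hom B (Go a) (Fo ci)" using S1 by auto
      show "(ci, Cod A (L fi)) \<in> Obj (fp C A Fo Fm Go Gm) \<and> L fi \<in> hom A a (Cod A (L fi))"
        using ci LC[OF fi] L[OF fi] by (auto simp: fp_simps hom_def)
    qed
    show "\<forall>c\<in>Obj (fp C A Fo Fm Go Gm). \<forall>f\<in>hom A a (snd c).
              \<exists>(ci, fi)\<in>S'. \<exists>g\<in>hom (fp C A Fo Fm Go Gm) ci c. f = Comp A (snd g) fi"
    proof (intro ballI)
      fix x f assume x: "x \<in> Obj (fp C A Fo Fm Go Gm)" and f: "f \<in> hom A a (snd x)"
      obtain c a'' where xe: "x = (c, a'')" by (cases x)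
      have c: "c \<in> Obj C" and a'': "a'' \<in> Obj A" and ca: "Fo c = Go a''" using x xe by (auto simp: fp_simps)
      have fA: "f \<in> Arr A" "Dom A f = a" "Cod A f = a''" using f xe by (auto simp: hom_def)
      have "Gm f \<in> hom B (Go a) (Fo c)" using fun_arr[OF G fA(1)] fA ca by (auto simp: hom_def)
      then obtain ci fi g where cfi: "(ci, fi) \<in> S" and g: "g \<in> hom C ci c" and eq: "Gm f = Comp B (Fm g) fi"
        using S2 c by blast
      have ci: "ci \<in> Obj C" and fi: "fi \<in> hom B (Go a) (Fo ci)" using S1 cfi by auto
      define l where "l = L fi"
      define ai where "ai = Cod A l"
      have l: "l \<in> Arr A" "Dom A l = a" "Gm l = fi" using L[OF fi] l_def by auto
      have ai: "ai \<in> Obj A" "Go ai = Fo ci" using LC[OF fi] l_def ai_def by auto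
      have gC: "g \<in> Arr C" "Dom C g = ci" "Cod C g = c" using g by (auto simp: hom_def)
      have Fg: "Fm g \<in> Arr B" "Dom B (Fm g) = Go ai" using fun_arr[OF F gC(1)] gC ai by auto
      obtain k where k: "k \<in> Arr A" "Dom A k = ai" "Gm k = Fm g"
        using disc_lift[OF D ai(1) Fg] by blast
      have kl: "Comp A k l \<in> Arr A" "Dom A (Comp A k l) = a" "Cod A (Comp A k l) = Cod A k"
        using cat_comp[OF cA l(1) k(1)] k l ai_def by auto
      have "Gm (Comp A k l) = Comp B (Gm k) (Gm l)"
        using fun_comp[OF G l(1) k(1)] k(2) ai_def by simp
      also have "\<dots> = Gm f" using eq k(3) l(3) by simp
      finally have gm: "Gm (Comp A k l) = Gm f" .
      have kf: "Comp A k l = f"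
        by (rule disc_unique[OF D kl(1) fA(1)]) (simp_all only: kl(2) fA(2) gm)
      hence codk: "Cod A k = a''" using kl fA by simp
      have "(g, k) \<in> hom (fp C A Fo Fm Go Gm) (ci, ai) x"
        using g k codk xe by (auto simp: fp_simps hom_def)
      moreover have "((ci, ai), l) \<in> S'" using cfi unfolding S'_def l_def ai_def by force
      ultimately show "\<exists>(ci, fi)\<in>S'. \<exists>g\<in>hom (fp C A Fo Fm Go Gm) ci x. f = Comp A (snd g) fi"
        using kf by force
    qed
  qed
qed



lemma hom_comp: "category C \<Longrightarrow> f \<in> hom C a b \<Longrightarrow> g \<in> hom C b c \<Longrightarrow> Comp C g f \<in> hom C a c"
  unfolding hom_def using cat_comp[of C f g] by auto

lemma fp_inj:
  assumes D: "discrete_opfibration A B Go Gm"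
    and p: "p \<in> hom (fp C A Fo Fm Go Gm) x y" and q: "q \<in> hom (fp C A Fo Fm Go Gm) x y" and e: "fst p = fst q"
  shows "p = q"
proof -
  have "snd p = snd q"
    by (rule disc_unique[OF D]) (use p q e in \<open>auto simp: fp_simps hom_def\<close>)
  thus ?thesis using e by (simp add: prod_eq_iff)
qed

lemma fp_grobner:
  assumes D: "discrete_opfibration A B Go Gm" and F: "is_functor C B Fo Fm" and GC: "grobner C"
  shows "grobner (fp C A Fo Fm Go Gm)"
proof -
  have G: "is_functor A B Go Gm" using D by (rule disc_fun)
  have cA: "category A" and cB: "category B" using fun_cat[OF G] by auto
  have cC: "category C" using fun_cat[OF F] by auto
  let ?P = "fp C A Fo Fm Go Gm"
  have cP: "category ?P" by (rule fp_category[OF cC cA F G])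
  have "(\<exists>r. admissible_order ?P x r) \<and> noetherian_under ?P x" if x: "x \<in> Obj ?P" for x
  proof -
    obtain c a where xe: "x = (c, a)" by (cases x)
    have c: "c \<in> Obj C" and a: "a \<in> Obj A" using x xe by (auto simp: fp_simps)
    have "(\<exists>r. admissible_order C c r) \<and> noetherian_under C c" using GC c unfolding grobner_def by blast
    then obtain r where r: "admissible_order C c r" and N: "noetherian_under C c" by blast
    have r1: "\<forall>c'\<in>Obj C. r c' \<subseteq> hom C c c' \<times> hom C c c' \<and> well_order_on (hom C c c') (r c')"
      using r unfolding admissible_order_def by (elim conjE)
    have r2: "\<forall>c'\<in>Obj C. \<forall>c''\<in>Obj C. \<forall>f\<in>hom C c c'. \<forall>f'\<in>hom C c c'. \<forall>g\<in>hom C c' c''.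
        (f, f') \<in> r c' \<and> f \<noteq> f' \<longrightarrow>
        (Comp C g f, Comp C g f') \<in> r c'' \<and> Comp C g f \<noteq> Comp C g f'"
      using r unfolding admissible_order_def by (elim conjE)
    define r' where "r' = (\<lambda>y. {(p,q). p \<in> hom ?P x y \<and> q \<in> hom ?P x y \<and> (fst p, fst q) \<in> r (fst y)})"
    have "admissible_order ?P x r'"
      unfolding admissible_order_def
    proof (intro conjI ballI)
      fix y assume y: "y \<in> Obj ?P"
      have fy: "fst y \<in> Obj C" using y by (simp add: fp_simps)
      show "r' y \<subseteq> hom ?P x y \<times> hom ?P x y" unfolding r'_def by auto
      have wo: "well_order_on (hom C c (fst y)) (r (fst y))" using r1 fy by blast
      have inj: "inj_on fst (hom ?P x y)" using fp_inj[OF D] by (meson inj_onI)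
      have im: "fst ` hom ?P x y \<subseteq> hom C c (fst y)" using xe by (auto simp: fp_hom)
      show "well_order_on (hom ?P x y) (r' y)"
        using wo_pullback[OF wo inj im] unfolding r'_def by simp
    next
      fix y' y'' p p' q
      assume y': "y' \<in> Obj ?P" and y'': "y'' \<in> Obj ?P" and p: "p \<in> hom ?P x y'" and p': "p' \<in> hom ?P x y'"
        and q: "q \<in> hom ?P y' y''"
      show "(p, p') \<in> r' y' \<and> p \<noteq> p' \<longrightarrow> (Comp ?P q p, Comp ?P q p') \<in> r' y'' \<and> Comp ?P q p \<noteq> Comp ?P q p'"
      proof
        assume as: "(p, p') \<in> r' y' \<and> p \<noteq> p'"
        have ne: "fst p \<noteq> fst p'" using fp_inj[OF D p p'] as by blast
        have fy': "fst y' \<in> Obj C" and fy'': "fst y'' \<in> Obj C" using y' y'' by (auto simp: fp_simps)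
        have hp: "fst p \<in> hom C c (fst y')" "fst p' \<in> hom C c (fst y')" "fst q \<in> hom C (fst y') (fst y'')"
          using p p' q xe by (auto simp: fp_hom)
        have rr: "(fst p, fst p') \<in> r (fst y')" using as unfolding r'_def by auto
        have res: "(Comp C (fst q) (fst p), Comp C (fst q) (fst p')) \<in> r (fst y'') \<and>
                 Comp C (fst q) (fst p) \<noteq> Comp C (fst q) (fst p')"
          using r2 fy' fy'' hp rr ne by blast
        have "Comp ?P q p \<in> hom ?P x y''" "Comp ?P q p' \<in> hom ?P x y''"
          using hom_comp[OF cP p q] hom_comp[OF cP p' q] by auto
        thus "(Comp ?P q p, Comp ?P q p') \<in> r' y'' \<and> Comp ?P q p \<noteq> Comp ?P q p'"
          using res unfolding r'_def by (auto simp: fp_simps)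
      qed
    qed
    moreover have "noetherian_under ?P x"
      unfolding noetherian_under_def
    proof (intro allI impI)
      fix X :: "nat \<Rightarrow> _" assume X: "\<forall>n. X n \<in> Arr ?P \<and> Dom ?P (X n) = x"
      have "\<forall>n. fst (X n) \<in> Arr C \<and> Dom C (fst (X n)) = c" using X xe by (auto simp: fp_simps)
      have N': "\<forall>Y :: nat \<Rightarrow> _. (\<forall>n. Y n \<in> Arr C \<and> Dom C (Y n) = c) \<longrightarrow>
        (\<exists>i j. i < j \<and> (\<exists>h\<in>hom C (Cod C (Y i)) (Cod C (Y j)). Y j = Comp C h (Y i)))"
        using N by (simp only: noetherian_under_def)
      note NN = mp[OF spec[OF N', of "\<lambda>n. fst (X n)"]]
      from NN[OF \<open>\<forall>n. fst (X n) \<in> Arr C \<and> Dom C (fst (X n)) = c\<close>]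
      obtain i j h where ij: "i < j" and h: "h \<in> hom C (Cod C (fst (X i))) (Cod C (fst (X j)))"
        and hj: "fst (X j) = Comp C h (fst (X i))"
        by (elim exE conjE bexE)
      have Xi: "fst (X i) \<in> Arr C" "snd (X i) \<in> Arr A" "Fm (fst (X i)) = Gm (snd (X i))" "Dom A (snd (X i)) = a"
        using X[rule_format, of i] xe by (auto simp: fp_simps)
      have Xj: "fst (X j) \<in> Arr C" "snd (X j) \<in> Arr A" "Fm (fst (X j)) = Gm (snd (X j))" "Dom A (snd (X j)) = a"
        using X[rule_format, of j] xe by (auto simp: fp_simps)
      have hC: "h \<in> Arr C" "Dom C h = Cod C (fst (X i))" "Cod C h = Cod C (fst (X j))" using h by (auto simp: hom_def)
      have ob: "Cod A (snd (X i)) \<in> Obj A" using cat_cod[OF cA Xi(2)] .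
      have "Go (Cod A (snd (X i))) = Cod B (Gm (snd (X i)))" using fun_arr[OF G Xi(2)] by simp
      also have "\<dots> = Cod B (Fm (fst (X i)))" using Xi(3) by simp
      also have "\<dots> = Fo (Cod C (fst (X i)))" using fun_arr[OF F Xi(1)] by simp
      finally have gco: "Go (Cod A (snd (X i))) = Fo (Cod C (fst (X i)))" .
      have Fh: "Fm h \<in> Arr B" "Dom B (Fm h) = Go (Cod A (snd (X i)))" using fun_arr[OF F hC(1)] hC gco by auto
      obtain k where k: "k \<in> Arr A" "Dom A k = Cod A (snd (X i))" "Gm k = Fm h"
        using disc_lift[OF D ob Fh] by blast
      have kc: "Comp A k (snd (X i)) \<in> Arr A" "Dom A (Comp A k (snd (X i))) = a"
        "Cod A (Comp A k (snd (X i))) = Cod A k"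
        using cat_comp[OF cA Xi(2) k(1)] k Xi by auto
      have "Gm (Comp A k (snd (X i))) = Comp B (Gm k) (Gm (snd (X i)))"
        using fun_comp[OF G Xi(2) k(1)] k(2) by simp
      also have "\<dots> = Comp B (Fm h) (Fm (fst (X i)))" using k(3) Xi(3) by simp
      also have "\<dots> = Fm (Comp C h (fst (X i)))" using fun_comp[OF F Xi(1) hC(1)] hC(2) by simp
      also have "\<dots> = Gm (snd (X j))" using hj Xj(3) by simp
      finally have gm: "Gm (Comp A k (snd (X i))) = Gm (snd (X j))" .
      have kj: "Comp A k (snd (X i)) = snd (X j)"
        by (rule disc_unique[OF D kc(1) Xj(2)]) (simp_all only: kc(2) Xj(4) gm)
      have "(h, k) \<in> hom ?P (Cod ?P (X i)) (Cod ?P (X j))"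
        using hC k kc kj by (auto simp: fp_simps hom_def)
      moreover have "X j = Comp ?P (h, k) (X i)" using hj kj by (simp add: fp_simps prod_eq_iff)
      ultimately show "\<exists>i j. i < j \<and> (\<exists>h\<in>hom ?P (Cod ?P (X i)) (Cod ?P (X j)). X j = Comp ?P h (X i))"
        using ij by blast
    qed
    ultimately show ?thesis by blast
  qed
  thus ?thesis using cP unfolding grobner_def by blast
qed


theorem lemma1p18:
  fixes A :: "('ao, 'am) cat" and B :: "('bo, 'bm) cat"
    and Go :: "'ao \<Rightarrow> 'bo" and Gm :: "'am \<Rightarrow> 'bm"
  assumes "discrete_opfibration A B Go Gm"
    and "quasi_grobner B TYPE('co \<times> 'cm)"
  shows "quasi_grobner A TYPE(('co \<times> 'ao) \<times> ('cm \<times> 'am))"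
proof -
  obtain C :: "('co, 'cm) cat" and Fo Fm where GC: "grobner C" and F: "is_functor C B Fo Fm"
    and E: "ess_surj C B Fo" and PF: "property_F C B Fo Fm"
    using assms(2) unfolding quasi_grobner_def by blast
  have G: "is_functor A B Go Gm" using assms(1) by (rule disc_fun)
  have cA: "category A" using fun_cat[OF G] by auto
  have cC: "category C" using fun_cat[OF F] by auto
  have "grobner (fp C A Fo Fm Go Gm)" by (rule fp_grobner[OF assms(1) F GC])
  moreover have "is_functor (fp C A Fo Fm Go Gm) A snd snd" by (rule fp_functor[OF cC cA F G])
  moreover have "ess_surj (fp C A Fo Fm Go Gm) A snd" by (rule fp_ess_surj[OF assms(1) F E])
  moreover have "property_F (fp C A Fo Fm Go Gm) A snd snd" by (rule fp_property_F[OF assms(1) F PF])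
  ultimately show ?thesis unfolding quasi_grobner_def by blast
qed

end
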